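(* Let $p\in(0,1)$, $\mu>0$, and let $k\ge 3$, $1\le \ell\le k-2$ and $m\ge 2$ be integers. Then there exist $n_0$ and $\alpha>0$ such that for every $n\ge n_0$ there exists a $(p,\mu)$-dense $k$-partite $k$-graph $H$, each of whose parts has exactly $n$ vertices, such that $\delta'_{\ell}(H)\ge \alpha n^{k-\ell}$ and $H$ has no $K_k(m)$-factor.
   Context: A $k$-graph $H$ has a vertex set $V(H)$ and an edge set $E(H)$ consisting of $k$-element subsets of $V(H)$. A $k$-partite $k$-graph comes with a fixed partition $V(H)=V_1\cup\dots\cup V_k$ (its parts) such that every edge meets each $V_i$ in at most one vertex. A set $S\subseteq V(H)$ is legal if $|S\cap V_i|\le 1$ for all $i$. For $S\subseteq V(H)$ with $|S|=s<k$, $\deg_H(S)$ is the number of $(k-s)$-sets $S'$ with $S\cup S'\in E(H)$. The partite minimum $s$-degree $\delta'_s(H)$ is the minimum of $\deg_H(S)$ over all legal $s$-subsets $S$. A $k$-partite $k$-graph $H$ with parts $V_1,\dots,V_k$ and $N=|V(H)|$ vertices is $(p,\mu)$-dense if for all $X_1\subseteq V_1,\dots,X_k\subseteq V_k$ we have $e_H(X_1,\dots,X_k)\ge p|X_1|\cdots|X_k|-\mu N^k$, where $e_H(X_1,\dots,X_k)$ is the number of $(x_1,\dots,x_k)\in X_1\times\dots\times X_k$ with $\{x_1,\dots,x_k\}\in E(H)$. $K_k(m)$ denotes the complete $k$-partite $k$-graph with each part of size $m$. An $F$-factor in $H$ is a set of pairwise vertex-disjoint subgraphs of $H$, each isomorphic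 to $F$, covering $V(H)$. *)

theory Defs
  imports "HOL-Library.FuncSet" Complex_Main
begin

definition kpart_vertices :: "nat \<Rightarrow> (nat \<Rightarrow> 'a set) \<Rightarrow> 'a set" where
  "kpart_vertices k V = (\<Union>i<k. V i)"

definition kpartite_kgraph :: "nat \<Rightarrow> (nat \<Rightarrow> 'a set) \<Rightarrow> 'a set set \<Rightarrow> bool" where
  "kpartite_kgraph k V E \<longleftrightarrow>
     (\<forall>i<k. finite (V i)) \<and>
     (\<forall>i<k. \<forall>j<k. i \<noteq> j \<longrightarrow> V i \<inter> V j = {}) \<and>
     (\<forall>e\<in>E. e \<subseteq> kpart_vertices k V \<and> card e = k \<and> (\<forall>i<k. card (e \<inter> V i) \<le> 1))"

definition legal :: "nat \<Rightarrow> (nat \<Rightarrow> 'a set) \<Rightarrow> 'a set \<Rightarrow> bool" where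
  "legal k V S \<longleftrightarrow> S \<subseteq> kpart_vertices k V \<and> (\<forall>i<k. card (S \<inter> V i) \<le> 1)"

definition hdeg :: "nat \<Rightarrow> 'a set set \<Rightarrow> 'a set \<Rightarrow> nat" where
  "hdeg k E S = card {S'. finite S' \<and> card S' = k - card S \<and> S \<union> S' \<in> E}"

definition partite_min_deg_ge :: "nat \<Rightarrow> (nat \<Rightarrow> 'a set) \<Rightarrow> 'a set set \<Rightarrow> nat \<Rightarrow> real \<Rightarrow> bool" where
  "partite_min_deg_ge k V E s d \<longleftrightarrow>
     (\<forall>S. finite S \<and> card S = s \<and> legal k V S \<longrightarrow> real (hdeg k E S) \<ge> d)"

definition e_H :: "nat \<Rightarrow> 'a set set \<Rightarrow> (nat \<Rightarrow> 'a set) \<Rightarrow> nat" where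
  "e_H k E X = card {x \<in> PiE {..<k} X. x ` {..<k} \<in> E}"

definition pmu_dense :: "nat \<Rightarrow> (nat \<Rightarrow> 'a set) \<Rightarrow> 'a set set \<Rightarrow> real \<Rightarrow> real \<Rightarrow> bool" where
  "pmu_dense k V E p \<mu> \<longleftrightarrow>
     (\<forall>X. (\<forall>i<k. X i \<subseteq> V i) \<longrightarrow>
        real (e_H k E X) \<ge> p * (\<Prod>i<k. real (card (X i)))
                          - \<mu> * real (card (kpart_vertices k V)) ^ k)"

definition subhypergraph :: "'a set \<times> 'a set set \<Rightarrow> 'a set \<times> 'a set set \<Rightarrow> bool" where
  "subhypergraph F H \<longleftrightarrow> fst F \<subseteq> fst H \<and> snd F \<subseteq> snd H \<and> (\<forall>e\<in>snd F. e \<subseteq> fst F)"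

definition hg_iso :: "'a set \<times> 'a set set \<Rightarrow> 'b set \<times> 'b set set \<Rightarrow> bool" where
  "hg_iso F G \<longleftrightarrow> (\<exists>f. bij_betw f (fst F) (fst G) \<and>
      (\<forall>e. e \<subseteq> fst F \<longrightarrow> (e \<in> snd F \<longleftrightarrow> f ` e \<in> snd G)))"

definition complete_kpartite :: "nat \<Rightarrow> nat \<Rightarrow> (nat \<times> nat) set \<times> (nat \<times> nat) set set" where
  "complete_kpartite k m =
     ({..<k} \<times> {..<m}, {(\<lambda>i. (i, g i)) ` {..<k} | g. \<forall>i<k. g i < m})"

definition has_factor :: "'a set \<times> 'a set set \<Rightarrow> 'b set \<times> 'b set set \<Rightarrow> bool" where
  "has_factor H F \<longleftrightarrow> (\<exists>\<F>. (\<forall>G\<in>\<F>. subhypergraph G H \<and> hg_iso G F) \<and>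
      (\<forall>G\<in>\<F>. \<forall>G'\<in>\<F>. G \<noteq> G' \<longrightarrow> fst G \<inter> fst G' = {}) \<and>
      (\<Union>G\<in>\<F>. fst G) = fst H)"

end

theory Submission
  imports Defs
begin


locale constr =
  fixes k n u w :: nat
  assumes n_pos: "0 < n" and k3: "3 \<le> k" and u_le: "u \<le> n" and w_le: "w \<le> n"
    and wu: "(k-1)*w < u"
begin

definition V :: "nat \<Rightarrow> nat set" where "V i = {i*n..<i*n+n}"
definition U :: "nat set" where "U = {..<u}"
definition W :: "nat set" where "W = {v. v < k*n \<and> n \<le> v \<and> v mod n < w}"
definition E :: "nat set set" where
  "E = {e. e \<subseteq> {..<k*n} \<and> card e = k \<and> (\<forall>i<k. card (e \<inter> V i) \<le> 1) \<and>
          (e \<inter> U \<noteq> {} \<longrightarrow> e \<inter> W \<noteq> {})}"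

lemma mem_V: "v \<in> V i \<longleftrightarrow> v div n = i"
proof
  assume "v \<in> V i"
  then have "n * i \<le> v" "v < n * Suc i" unfolding V_def by (auto simp: mult.commute)
  then show "v div n = i" by (rule div_nat_eqI)
next
  assume h: "v div n = i"
  have "v = v div n * n + v mod n" by simp
  moreover have "v mod n < n" using n_pos by simp
  ultimately show "v \<in> V i" unfolding V_def h[symmetric] by (metis atLeastLessThan_iff add_less_cancel_left le_add1)
qed

lemma V_eq: "v \<in> V i \<Longrightarrow> v \<in> V j \<Longrightarrow> i = j"
  by (simp add: mem_V)

lemma kpart: "kpart_vertices k V = {..<k*n}"
  unfolding kpart_vertices_def using n_pos
  by (auto simp: mem_V less_mult_imp_div_less div_less_iff_less_mult)

lemma card_V: "card (V i) = n" by (simp add: V_def)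
lemma fin_V: "finite (V i)" by (simp add: V_def)

lemma U_V0: "U \<subseteq> V 0" using u_le by (auto simp: U_def V_def)
lemma UW: "U \<inter> W = {}" using u_le by (auto simp: U_def W_def)

lemma card_W: "card W \<le> (k-1)*w"
proof -
  have "W \<subseteq> (\<lambda>(j,t). j*n+t) ` ({1..<k}\<times>{..<w})"
  proof
    fix v assume v: "v \<in> W"
    have "n div n \<le> v div n" by (rule div_le_mono) (use v in \<open>simp add: W_def\<close>)
    then have a: "1 \<le> v div n" using n_pos by simp
    have "v < k * n" using v by (simp add: W_def)
    then have b: "v div n < k" using n_pos by (simp add: div_less_iff_less_mult)
    have c: "v mod n < w" using v by (simp add: W_def)
    have "v = (\<lambda>(j,t). j*n+t) (v div n, v mod n)" by simp
    moreover have "(v div n, v mod n) \<in> {1..<k}\<times>{..<w}" using a b c by simp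
    ultimately show "v \<in> (\<lambda>(j,t). j*n+t) ` ({1..<k}\<times>{..<w})" by (rule image_eqI)
  qed
  then have "card W \<le> card ((\<lambda>(j,t). j*n+t) ` ({1..<k}\<times>{..<w}))"
    by (intro card_mono finite_imageI) simp_all
  also have "\<dots> \<le> card ({1..<k}\<times>{..<w})" by (rule card_image_le) simp
  finally have "card W \<le> card ({1..<k}\<times>{..<w})" .
  then show ?thesis by (simp add: card_cartesian_product)
qed

lemma kpartite: "kpartite_kgraph k V E"
  unfolding kpartite_kgraph_def using kpart fin_V V_eq by (auto simp: E_def)

lemma card_sum: assumes "S \<subseteq> {..<k*n}" shows "card S = (\<Sum>i<k. card (S \<inter> V i))"
proof -
  have "S = (\<Union>i<k. S \<inter> V i)" using assms kpart[unfolded kpart_vertices_def] by auto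
  moreover have "card (\<Union>i<k. S \<inter> V i) = (\<Sum>i<k. card (S \<inter> V i))"
    by (rule card_UN_disjoint) (auto simp: fin_V dest: V_eq)
  ultimately show ?thesis by simp
qed


end

context constr begin
lemma dense:
  assumes p: "0 \<le> p" "p \<le> 1" and mu: "real u * real n ^ (k-1) \<le> \<mu> * real (k*n) ^ k"
  shows "pmu_dense k V E p \<mu>"
  unfolding pmu_dense_def
proof (intro allI impI)
  fix X assume X: "\<forall>i<k. X i \<subseteq> V i"
  define P where "P = PiE {..<k} X"
  define B where "B = PiE {..<k} (X(0 := X 0 \<inter> U))"
  have finX: "finite (X i)" if "i < k" for i using X that fin_V finite_subset by blast
  have finP: "finite P" unfolding P_def using finX by (intro finite_PiE) auto
  have BP: "B \<subseteq> P" unfolding B_def P_def by (rule PiE_mono) auto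
  have sub: "P - B \<subseteq> {x \<in> PiE {..<k} X. x ` {..<k} \<in> E}"
  proof
    fix x assume x: "x \<in> P - B"
    have xP: "x \<in> PiE {..<k} X" using x P_def by auto
    have xV: "x i \<in> V i" if "i < k" for i using xP X that by auto
    have x0: "x 0 \<notin> U"
    proof
      assume "x 0 \<in> U"
      then have "x \<in> B" using xP unfolding B_def by (auto simp: PiE_iff)
      then show False using x by auto
    qed
    have inj: "inj_on x {..<k}" by (rule inj_onI) (metis V_eq lessThan_iff xV)
    have "x ` {..<k} \<subseteq> {..<k*n}" using xV kpart[unfolded kpart_vertices_def] by auto
    moreover have "card (x ` {..<k}) = k" using inj by (simp add: card_image)
    moreover have "card (x ` {..<k} \<inter> V i) \<le> 1" if "i < k" for i
    proof -
      have "x ` {..<k} \<inter> V i \<subseteq> {x i}" using xV V_eq by auto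
      then show ?thesis by (metis card_mono finite.emptyI finite.insertI is_singletonI is_singleton_altdef)
    qed
    moreover have "x ` {..<k} \<inter> U = {}"
    proof -
      { fix j assume j: "j < k" "x j \<in> U"
        then have "x j \<in> V 0" using U_V0 by auto
        then have "j = 0" using xV[OF j(1)] V_eq by blast
        then have False using j x0 by simp }
      then show ?thesis by auto
    qed
    ultimately show "x \<in> {x \<in> PiE {..<k} X. x ` {..<k} \<in> E}" using xP by (auto simp: E_def)
  qed
  have "card (P - B) \<le> e_H k E X" unfolding e_H_def
    by (rule card_mono[OF _ sub]) (simp add: P_def[symmetric] finP)
  moreover have "card (P - B) = card P - card B" using BP finP by (meson card_Diff_subset finite_subset)
  moreover have "card B \<le> card P" using BP finP card_mono by blast
  ultimately have e1: "real (e_H k E X) \<ge> real (card P) - real (card B)" by linarith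
  have cP: "real (card P) = (\<Prod>i<k. real (card (X i)))" unfolding P_def by (simp add: card_PiE)
  have cB: "real (card B) = (\<Prod>i<k. real (card ((X(0 := X 0 \<inter> U)) i)))" unfolding B_def by (simp add: card_PiE)
  also have "\<dots> \<le> (\<Prod>i<k. (if i = 0 then real u else real n))"
  proof (rule prod_mono)
    fix i assume i: "i \<in> {..<k}"
    show "0 \<le> real (card ((X(0 := X 0 \<inter> U)) i)) \<and> real (card ((X(0 := X 0 \<inter> U)) i)) \<le> (if i = 0 then real u else real n)"
    proof (cases "i = 0")
      case True
      have "card (X 0 \<inter> U) \<le> card U" by (rule card_mono) (auto simp: U_def)
      then show ?thesis using True by (simp add: U_def)
    next
      case False
      have "card (X i) \<le> card (V i)" using X i by (intro card_mono[OF fin_V]) auto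
      then show ?thesis using False by (simp add: card_V)
    qed
  qed
  also have "\<dots> = real u * real n ^ (k-1)"
  proof -
    have k: "k = Suc (k-1)" using k3 by simp
    have "(\<Prod>i<Suc (k-1). (if i = 0 then real u else real n)) = real u * real n ^ (k-1)"
      by (subst prod.lessThan_Suc_shift) simp
    then show ?thesis using k by metis
  qed
  finally have "real (card B) \<le> \<mu> * real (k*n) ^ k" using mu by linarith
  moreover have "p * real (card P) \<le> real (card P)" using p by (simp add: mult_left_le_one_le)
  ultimately show "p * (\<Prod>i<k. real (card (X i))) - \<mu> * real (card (kpart_vertices k V)) ^ k \<le> real (e_H k E X)"
    using e1 cP by (simp add: kpart)
qed


end

context constr begin
lemma degree:
  assumes l: "l + 2 \<le> k"
  shows "partite_min_deg_ge k V E l (real w * real n ^ (k-l-1))"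
  unfolding partite_min_deg_ge_def
proof (intro allI impI)
  fix S assume S: "finite S \<and> card S = l \<and> legal k V S"
  have SN: "S \<subseteq> {..<k*n}" using S kpart by (simp add: legal_def)
  have S1: "card (S \<inter> V i) \<le> 1" if "i < k" for i using S that by (simp add: legal_def)
  define M where "M = {i\<in>{..<k}. S \<inter> V i = {}}"
  have "l = (\<Sum>i<k. card (S \<inter> V i))" using card_sum[OF SN] S by simp
  also have "\<dots> = (\<Sum>i<k. if S \<inter> V i = {} then 0 else 1)"
  proof (rule sum.cong)
    fix i assume "i \<in> {..<k}"
    then have "card (S \<inter> V i) \<le> 1" using S1 by simp
    moreover have "finite (S \<inter> V i)" using S by simp
    ultimately show "card (S \<inter> V i) = (if S \<inter> V i = {} then 0 else 1)"
      by (metis One_nat_def card_0_eq le_SucE le_zero_eq)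
  qed simp
  also have "\<dots> = card ({..<k} - M)"
    unfolding M_def by (simp add: sum.If_cases Diff_eq Int_def) (intro arg_cong[where f=card], blast)
  also have "\<dots> = k - card M" by (subst card_Diff_subset) (auto simp: M_def)
  finally have lk: "l = k - card M" .
  have "card M \<le> card {..<k}" by (rule card_mono) (auto simp: M_def)
  then have cM: "card M = k - l" using lk by simp
  have finM: "finite M" by (simp add: M_def)
  obtain j0 where j0: "j0 \<in> M" "j0 \<noteq> 0"
  proof -
    have "\<not> M \<subseteq> {0}"
    proof
      assume "M \<subseteq> {0}"
      then have "card M \<le> card {0::nat}" by (intro card_mono) auto
      then have "card M \<le> 1" by simp
      then show False using cM l by simp
    qed
    then show ?thesis using that by auto
  qed
  have j0k: "j0 < k" using j0 M_def by auto
  define Y where "Y i = (if i = j0 then {j0*n..<j0*n+w} else V i)" for i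
  have YV: "Y i \<subseteq> V i" for i using w_le by (auto simp: Y_def V_def)
  define F where "F = (\<lambda>x. x ` M) ` PiE M Y"
  have inj: "inj_on (\<lambda>x. x ` M) (PiE M Y)"
  proof (rule inj_onI)
    fix x y assume x: "x \<in> PiE M Y" and y: "y \<in> PiE M Y" and eq: "x ` M = y ` M"
    show "x = y"
    proof (rule PiE_ext[OF x y])
      fix i assume i: "i \<in> M"
      then have "x i \<in> y ` M" using eq by blast
      then obtain j where j: "j \<in> M" "x i = y j" by auto
      have "x i \<in> V i" using x i YV by auto
      moreover have "y j \<in> V j" using y j YV by auto
      ultimately have "i = j" using j V_eq by metis
      then show "x i = y i" using j by simp
    qed
  qed
  have "card F = (\<Prod>i\<in>M. card (Y i))" unfolding F_def using inj finM
    by (simp add: card_image card_PiE)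
  also have "\<dots> = card (Y j0) * (\<Prod>i\<in>M-{j0}. card (Y i))"
    using finM j0 by (simp add: prod.remove)
  also have "\<dots> = w * n ^ (k-l-1)"
  proof -
    have "(\<Prod>i\<in>M-{j0}. card (Y i)) = (\<Prod>i\<in>M-{j0}. n)"
      by (rule prod.cong) (auto simp: Y_def card_V)
    also have "\<dots> = n ^ (k-l-1)" using cM j0 finM by simp
    finally show ?thesis by (simp add: Y_def)
  qed
  finally have cF: "card F = w * n ^ (k-l-1)" .
  define T where "T = {S'. finite S' \<and> card S' = k - card S \<and> S \<union> S' \<in> E}"
  have FT: "F \<subseteq> T"
  proof
    fix z assume "z \<in> F"
    then obtain x where x: "x \<in> PiE M Y" and z: "z = x ` M" unfolding F_def by auto
    have xV: "x i \<in> V i" if "i \<in> M" for i using x that YV by auto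
    have injx: "inj_on x M" by (rule inj_onI) (metis V_eq xV)
    have cz: "card z = k - l" using injx cM z by (simp add: card_image)
    have disj: "S \<inter> z = {}"
    proof -
      { fix i assume i: "i \<in> M" "x i \<in> S"
        then have "x i \<in> S \<inter> V i" using xV by auto
        then have False using i M_def by auto }
      then show ?thesis using z by auto
    qed
    have "S \<union> z \<subseteq> {..<k*n}" using SN xV z M_def kpart[unfolded kpart_vertices_def] by auto
    moreover have "card (S \<union> z) = k" using disj cz S l z finM by (simp add: card_Un_disjoint)
    moreover have "card ((S \<union> z) \<inter> V i) \<le> 1" if i: "i < k" for i
    proof (cases "i \<in> M")
      case True
      have "(S \<union> z) \<inter> V i \<subseteq> {x i}" using True M_def z xV V_eq by auto
      then show ?thesis by (metis card_mono finite.emptyI finite.insertI is_singletonI is_singleton_altdef)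
    next
      case False
      have "(S \<union> z) \<inter> V i = S \<inter> V i" using False z xV V_eq by auto
      then show ?thesis using S1 i by simp
    qed
    moreover have "(S \<union> z) \<inter> W \<noteq> {}"
    proof -
      have xj: "x j0 \<in> {j0*n..<j0*n+w}" proof - have "x j0 \<in> Y j0" using x j0 by (auto simp: PiE_iff) then show ?thesis by (simp add: Y_def) qed
      have "x j0 \<in> W"
      proof -
        obtain t where t: "x j0 = j0*n + t" "t < w" using xj by (metis add_less_cancel_left atLeastLessThan_iff le_Suc_ex)
        have "j0 * n + t < k * n"
        proof -
          have "j0*n + t < j0*n + n" using t w_le by simp
          also have "\<dots> = Suc j0 * n" by simp
          also have "\<dots> \<le> k * n" using j0k by (intro mult_right_mono) auto
          finally show ?thesis .
        qed
        moreover have "n \<le> j0*n + t" using j0 by (metis le_add1 le_trans mult_le_mono1 not_less_zero One_nat_def Suc_leI neq0_conv mult_1)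
        moreover have "(j0*n + t) mod n = t" using t w_le by simp
        ultimately show ?thesis using t by (simp add: W_def)
      qed
      then show ?thesis using z j0 by auto
    qed
    ultimately show "z \<in> T" using z cz S by (auto simp: T_def E_def)
  qed
  have "finite T"
  proof (rule finite_subset)
    show "T \<subseteq> Pow {..<k*n}" by (auto simp: T_def E_def)
  qed simp
  then have "card F \<le> card T" using FT card_mono by blast
  then show "real w * real n ^ (k - l - 1) \<le> real (hdeg k E S)"
    unfolding hdeg_def T_def[symmetric] cF by (metis of_nat_le_iff of_nat_mult of_nat_power)
qed

end


lemma iso_inv:
  assumes "hg_iso G K"
  obtains h where "bij_betw h (fst K) (fst G)" "\<forall>e. e \<subseteq> fst K \<longrightarrow> e \<in> snd K \<longrightarrow> h ` e \<in> snd G"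
proof -
  obtain f where f: "bij_betw f (fst G) (fst K)"
    and iso: "\<forall>e. e \<subseteq> fst G \<longrightarrow> (e \<in> snd G \<longleftrightarrow> f ` e \<in> snd K)"
    using assms unfolding hg_iso_def by blast
  define h where "h = inv_into (fst G) f"
  have hb: "bij_betw h (fst K) (fst G)" unfolding h_def by (rule bij_betw_inv_into[OF f])
  have "h ` e \<in> snd G" if e: "e \<subseteq> fst K" "e \<in> snd K" for e
  proof -
    have sub: "h ` e \<subseteq> fst G" using hb e bij_betw_imp_surj_on by blast
    have "f ` (h ` e) = e" unfolding h_def
      by (rule image_inv_into_cancel[OF bij_betw_imp_surj_on[OF f] e(1)])
    then show ?thesis using iso sub e by auto
  qed
  then show ?thesis using that hb by blast
qed

context constr begin

lemma no_factor:
  assumes m: "1 \<le> m"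
  shows "\<not> has_factor (kpart_vertices k V, E) (complete_kpartite k m)"
proof
  assume "has_factor (kpart_vertices k V, E) (complete_kpartite k m)"
  then obtain FF where H1: "\<forall>G\<in>FF. subhypergraph G ({..<k*n}, E) \<and> hg_iso G (complete_kpartite k m)"
    and H2: "\<forall>G\<in>FF. \<forall>G'\<in>FF. G \<noteq> G' \<longrightarrow> fst G \<inter> fst G' = {}"
    and H3: "(\<Union>G\<in>FF. fst G) = {..<k*n}"
    unfolding has_factor_def kpart by auto
  have key: "card (fst G \<inter> U) \<le> card (fst G \<inter> W)" if G: "G \<in> FF" for G
  proof -
    define A where "A = fst G"
    have AN: "A \<subseteq> {..<k*n}" and GE: "snd G \<subseteq> E" using H1 G by (auto simp: subhypergraph_def A_def)
    have iso: "hg_iso G (complete_kpartite k m)" using H1 G by blast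
    have fK: "fst (complete_kpartite k m) = {..<k}\<times>{..<m}" by (simp add: complete_kpartite_def)
    obtain h where h0: "bij_betw h (fst (complete_kpartite k m)) (fst G)"
      and hE0: "\<forall>e. e \<subseteq> fst (complete_kpartite k m) \<longrightarrow> e \<in> snd (complete_kpartite k m) \<longrightarrow> h ` e \<in> snd G"
      using iso_inv[OF iso] by blast
    have h: "bij_betw h ({..<k}\<times>{..<m}) A" using h0 fK A_def by simp
    have hE: "\<forall>e. e \<subseteq> {..<k}\<times>{..<m} \<longrightarrow> e \<in> snd (complete_kpartite k m) \<longrightarrow> h ` e \<in> snd G"
      using hE0 fK by simp
    have injh: "inj_on h ({..<k}\<times>{..<m})" and imh: "h ` ({..<k}\<times>{..<m}) = A"
      using h by (auto simp: bij_betw_def)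
    have finA: "finite A" using AN finite_subset by blast
    have edge: "(\<lambda>i. h (i, g i)) ` {..<k} \<in> E" if g: "\<forall>i<k. g i < m" for g
    proof -
      have "(\<lambda>i. (i, g i)) ` {..<k} \<subseteq> {..<k}\<times>{..<m}" using g by auto
      moreover have "(\<lambda>i. (i, g i)) ` {..<k} \<in> snd (complete_kpartite k m)"
        using g unfolding complete_kpartite_def by auto
      ultimately have "h ` ((\<lambda>i. (i, g i)) ` {..<k}) \<in> snd G" using hE by blast
      then have "(\<lambda>i. h (i, g i)) ` {..<k} \<in> snd G" by (simp add: image_image)
      then show ?thesis using GE by blast
    qed
    have c1: "card (A \<inter> V 0) \<le> m"
    proof (cases "A \<inter> V 0 = {}")
      case True then show ?thesis by simp
    next
      case False
      then obtain v0 where v0: "v0 \<in> A" "v0 \<in> V 0" by auto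
      then obtain a s where as: "a < k" "s < m" "v0 = h (a, s)" using imh by auto
      have "A \<inter> V 0 \<subseteq> h ` ({a}\<times>{..<m})"
      proof
        fix v assume v: "v \<in> A \<inter> V 0"
        then obtain b t where bt: "b < k" "t < m" "v = h (b, t)" using imh by auto
        have "b = a"
        proof (rule ccontr)
          assume ba: "b \<noteq> a"
          define g where "g j = (if j = a then s else if j = b then t else 0)" for j
          have "\<forall>i<k. g i < m" using as bt m by (auto simp: g_def)
          then have e: "(\<lambda>i. h (i, g i)) ` {..<k} \<in> E" by (rule edge)
          have "v0 \<in> (\<lambda>i. h (i, g i)) ` {..<k} \<inter> V 0"
            using as v0 by (auto simp: g_def intro!: image_eqI[where x=a])
          moreover have "v \<in> (\<lambda>i. h (i, g i)) ` {..<k} \<inter> V 0"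
            using bt v ba by (auto simp: g_def intro!: image_eqI[where x=b])
          moreover have "card ((\<lambda>i. h (i, g i)) ` {..<k} \<inter> V 0) \<le> 1" using e k3 by (auto simp: E_def)
          moreover have "finite ((\<lambda>i. h (i, g i)) ` {..<k} \<inter> V 0)" by simp
          ultimately have "v0 = v" using card_le_Suc0_iff_eq by (metis One_nat_def)
          then have "(a, s) = (b, t)" using injh as bt by (auto dest: inj_onD)
          then show False using ba by simp
        qed
        then show "v \<in> h ` ({a}\<times>{..<m})" using bt by auto
      qed
      then have "card (A \<inter> V 0) \<le> card (h ` ({a}\<times>{..<m}))" by (intro card_mono) auto
      also have "\<dots> \<le> card ({a}\<times>{..<m})" by (rule card_image_le) simp
      finally show ?thesis by simp
    qed
    have c2: "m \<le> card (A \<inter> W)" if AU: "A \<inter> U \<noteq> {}"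
    proof -
      obtain u0 where u0: "u0 \<in> A" "u0 \<in> U" using AU by auto
      then obtain a s where as: "a < k" "s < m" "u0 = h (a, s)" using imh by auto
      have "\<exists>j<k. \<forall>t<m. h (j, t) \<in> W"
      proof (rule ccontr)
        assume "\<not> (\<exists>j<k. \<forall>t<m. h (j, t) \<in> W)"
        then have "\<forall>j. \<exists>t. j < k \<longrightarrow> t < m \<and> h (j, t) \<notin> W" by auto
        then obtain tt where tt: "\<forall>j. j < k \<longrightarrow> tt j < m \<and> h (j, tt j) \<notin> W" by metis
        define g where "g j = (if j = a then s else tt j)" for j
        have "\<forall>i<k. g i < m" using as tt by (auto simp: g_def)
        then have e: "(\<lambda>i. h (i, g i)) ` {..<k} \<in> E" by (rule edge)
        have "u0 \<in> (\<lambda>i. h (i, g i)) ` {..<k}" using as by (auto simp: g_def intro!: image_eqI[where x=a])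
        then have "(\<lambda>i. h (i, g i)) ` {..<k} \<inter> W \<noteq> {}" using e u0 by (auto simp: E_def)
        then obtain i where i: "i < k" "h (i, g i) \<in> W" by auto
        show False
        proof (cases "i = a")
          case True then show False using i as u0 UW by (auto simp: g_def)
        next
          case False then show False using i tt by (auto simp: g_def)
        qed
      qed
      then obtain j where j: "j < k" "\<forall>t<m. h (j, t) \<in> W" by auto
      have sub: "h ` ({j}\<times>{..<m}) \<subseteq> A \<inter> W" using j imh by auto
      have "inj_on h ({j}\<times>{..<m})" by (rule inj_on_subset[OF injh]) (use j in auto)
      then have "card (h ` ({j}\<times>{..<m})) = m" by (simp add: card_image)
      then show ?thesis using card_mono[OF _ sub] finA by auto
    qed
    have "card (A \<inter> U) \<le> card (A \<inter> V 0)" using U_V0 finA by (intro card_mono) auto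
    then show ?thesis using c1 c2 unfolding A_def[symmetric] by fastforce
  qed
  define AA where "AA = fst ` FF"
  have AAN: "AA \<subseteq> Pow {..<k*n}" using H3 by (auto simp: AA_def)
  then have finAA: "finite AA" using finite_subset by blast
  have fin: "\<forall>A\<in>AA. finite A" using AAN finite_subset by blast
  have dis: "\<forall>A\<in>AA. \<forall>B\<in>AA. A \<noteq> B \<longrightarrow> A \<inter> B = {}"
  proof (intro ballI impI)
    fix A B assume "A \<in> AA" "B \<in> AA" "A \<noteq> B"
    then obtain G G' where "G \<in> FF" "G' \<in> FF" "A = fst G" "B = fst G'" by (auto simp: AA_def)
    then show "A \<inter> B = {}" using H2 \<open>A \<noteq> B\<close> by metis
  qed
  have UN: "U \<subseteq> {..<k*n}" using u_le k3 unfolding U_def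
    by auto (metis le_trans less_le_trans mult_le_mono1 not_le one_le_numeral le_less_trans
          Suc_le_eq le_add1 mult_1 numeral_3_eq_3 )
  have WN: "W \<subseteq> {..<k*n}" by (auto simp: W_def)
  have Ueq: "U = (\<Union>A\<in>AA. A \<inter> U)" using UN H3 by (auto simp: AA_def)
  have Weq: "W = (\<Union>A\<in>AA. A \<inter> W)" using WN H3 by (auto simp: AA_def)
  have "card U = (\<Sum>A\<in>AA. card (A \<inter> U))"
    by (subst Ueq, rule card_UN_disjoint) (use finAA fin dis in auto)
  also have "\<dots> \<le> (\<Sum>A\<in>AA. card (A \<inter> W))"
    by (rule sum_mono) (use key in \<open>auto simp: AA_def\<close>)
  also have "\<dots> = card W"
    by (subst Weq, rule card_UN_disjoint[symmetric]) (use finAA fin dis in auto)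
  finally have "card U \<le> card W" .
  moreover have "card U = u" by (simp add: U_def)
  ultimately show False using card_W wu by linarith
qed

end


lemma mono_deg: "partite_min_deg_ge k V E l d \<Longrightarrow> d' \<le> d \<Longrightarrow> partite_min_deg_ge k V E l d'"
  unfolding partite_min_deg_ge_def by force

theorem theorem1p3:
  fixes p \<mu> :: real and k l m :: nat
  assumes "0 < p" "p < 1" "\<mu> > 0" "k \<ge> 3" "1 \<le> l" "l \<le> k - 2" "m \<ge> 2"
  shows "\<exists>n0 (\<alpha>::real). \<alpha> > 0 \<and> (\<forall>n\<ge>n0. \<exists>(V::nat \<Rightarrow> nat set) (E::nat set set).
            kpartite_kgraph k V E \<and> (\<forall>i<k. card (V i) = n) \<and>
            pmu_dense k V E p \<mu> \<and>
            partite_min_deg_ge k V E l (\<alpha> * real n ^ (k - l)) \<and>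
            \<not> has_factor (kpart_vertices k V, E) (complete_kpartite k m))"
proof -
  define c where "c = min \<mu> 1 / real k"
  have kpos: "real k \<ge> 3" using assms by simp
  have cpos: "c > 0" using assms by (simp add: c_def)
  have ck1: "c * real k \<le> 1" using kpos by (simp add: c_def)
  have ckmu: "c * real k \<le> \<mu>" using kpos by (simp add: c_def)
  define n0 where "n0 = nat \<lceil>2 / c\<rceil> + k"
  have "\<forall>n\<ge>n0. \<exists>(V::nat \<Rightarrow> nat set) (E::nat set set).
            kpartite_kgraph k V E \<and> (\<forall>i<k. card (V i) = n) \<and>
            pmu_dense k V E p \<mu> \<and>
            partite_min_deg_ge k V E l (c / 2 * real n ^ (k - l)) \<and>
            \<not> has_factor (kpart_vertices k V, E) (complete_kpartite k m)"
  proof (intro allI impI)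
    fix n assume nn0: "n \<ge> n0"
    have nk: "k \<le> n" using nn0 by (simp add: n0_def)
    have n2c: "2 / c \<le> real n"
    proof -
      have "2 / c \<le> real (nat \<lceil>2 / c\<rceil>)" by linarith
      also have "\<dots> \<le> real n"
      proof -
        have "nat \<lceil>2 / c\<rceil> \<le> n" using nn0 unfolding n0_def by linarith
        then show ?thesis by (simp only: of_nat_le_iff)
      qed
      finally show ?thesis .
    qed
    have cn2: "2 \<le> c * real n" using n2c cpos by (simp add: field_simps)
    define w where "w = nat \<lfloor>c * real n\<rfloor>"
    define u where "u = (k-1)*w + 1"
    have fl0: "0 \<le> \<lfloor>c * real n\<rfloor>" using cpos by simp
    have wfl: "real w = real_of_int \<lfloor>c * real n\<rfloor>" unfolding w_def using fl0 by simp
    have w1: "real w \<le> c * real n" unfolding wfl by simp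
    have w2: "real w \<ge> c * real n - 1" unfolding wfl
      using real_of_int_floor_gt_diff_one[of "c * real n"] by linarith
    have npos: "0 < n" using nk assms by simp
    have rn: "real n \<ge> real k" using nk by simp
    have cnk: "(real k - 1) * (c * real n) \<le> real n - 1"
    proof -
      have "(real k - 1) * (c * real n) = c * real k * real n - c * real n" by (simp add: algebra_simps)
      also have "\<dots> \<le> real n - c * real n" using mult_right_mono[OF ck1, of "real n"] by simp
      finally show ?thesis using cn2 by linarith
    qed
    have ru: "real u = (real k - 1) * real w + 1" unfolding u_def using assms by (simp add: of_nat_diff)
    have km1: "real k - 1 \<ge> 0" using kpos by simp
    have ru1: "real u \<le> (real k - 1) * (c * real n) + 1" using ru w1 km1 by (simp add: mult_left_mono)
    have un: "u \<le> n" using ru1 cnk by linarith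
    have wn: "w \<le> n"
    proof -
      have "c \<le> c * real k" using cpos kpos by simp
      then have "c \<le> 1" using ck1 by linarith
      then have "c * real n \<le> real n" using mult_right_mono[of c 1 "real n"] by simp
      then have "real w \<le> real n" using w1 by linarith
      then show ?thesis by (simp only: of_nat_le_iff)
    qed
    interpret constr k n u w
      by unfold_locales (use npos assms un wn in \<open>auto simp: u_def\<close>)
    have mun: "1 \<le> \<mu> * real n"
    proof -
      have "2 \<le> c * real n" by (rule cn2)
      also have "\<dots> \<le> \<mu> * real n"
      proof -
        have "c \<le> c * real k" using cpos kpos by simp
        then have "c \<le> \<mu>" using ckmu by linarith
        then show ?thesis by (intro mult_right_mono) auto
      qed
      finally show ?thesis by simp
    qed
    have ru2: "real u \<le> 2 * \<mu> * real n"
    proof -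
      have "(real k - 1) * (c * real n) \<le> real k * (c * real n)" using cpos npos by simp
      also have "\<dots> \<le> \<mu> * real n" using ckmu npos by (simp add: mult.assoc[symmetric] mult_right_mono mult.commute[of "real k" c])
      finally show ?thesis using ru1 mun by linarith
    qed
    have dens: "real u * real n ^ (k-1) \<le> \<mu> * real (k*n) ^ k"
    proof -
      have "real u * real n ^ (k-1) \<le> 2 * \<mu> * real n * real n ^ (k-1)"
        using ru2 by (simp add: mult_right_mono)
      also have "\<dots> = 2 * \<mu> * real n ^ k"
      proof -
        have s: "k = Suc (k-1)" using assms by simp
        have "real n * real n ^ (k-1) = real n ^ k" by (metis s power_Suc)
        then show ?thesis by (simp add: mult.assoc)
      qed
      also have "\<dots> \<le> real k ^ k * \<mu> * real n ^ k"
      proof -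
        have "(2::real) \<le> real k" using kpos by simp
        also have "\<dots> \<le> real k ^ k"
        proof -
          have s: "k = Suc (k-1)" using assms by simp
          have "1 \<le> real k ^ (k-1)" using kpos by (intro one_le_power) simp
          then have "real k * 1 \<le> real k * real k ^ (k-1)" using kpos by (intro mult_left_mono) auto
          also have "\<dots> = real k ^ k" by (metis s power_Suc)
          finally show ?thesis by simp
        qed
        finally show ?thesis using assms by (simp add: mult_right_mono)
      qed
      also have "\<dots> = \<mu> * real (k*n) ^ k" by (simp add: power_mult_distrib)
      finally show ?thesis .
    qed
    have deg: "c / 2 * real n ^ (k - l) \<le> real w * real n ^ (k-l-1)"
    proof -
      have s: "k - l = Suc (k - l - 1)" using assms by simp
      have e: "real n ^ (k - l) = real n * real n ^ (k-l-1)" by (metis s power_Suc)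
      have "c / 2 * real n \<le> real w" using w2 cn2 by linarith
      then have "c / 2 * real n * real n ^ (k-l-1) \<le> real w * real n ^ (k-l-1)"
        by (rule mult_right_mono) simp
      then show ?thesis unfolding e by (simp add: mult.assoc)
    qed
    show "\<exists>(V::nat \<Rightarrow> nat set) (E::nat set set).
            kpartite_kgraph k V E \<and> (\<forall>i<k. card (V i) = n) \<and>
            pmu_dense k V E p \<mu> \<and>
            partite_min_deg_ge k V E l (c / 2 * real n ^ (k - l)) \<and>
            \<not> has_factor (kpart_vertices k V, E) (complete_kpartite k m)"
    proof (intro exI conjI)
      show "kpartite_kgraph k V E" by (rule kpartite)
      show "\<forall>i<k. card (V i) = n" by (simp add: card_V)
      show "pmu_dense k V E p \<mu>" by (rule dense) (use assms dens in auto)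
      show "partite_min_deg_ge k V E l (c / 2 * real n ^ (k - l))"
        by (rule mono_deg[OF degree deg]) (use assms in auto)
      show "\<not> has_factor (kpart_vertices k V, E) (complete_kpartite k m)"
        by (rule no_factor) (use assms in auto)
    qed
  qed
  then show ?thesis using cpos by (intro exI[of _ n0] exI[of _ "c/2"]) auto
qed

end
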